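(* Let $\mathcal B$ be a finite set of finite algebras of signature $F$ and assume that $\mathcal B$ has a majority term. The algebras in $\mathcal B$ share a common ternary discriminator term if and only if, for all $\mathbf A_1,\mathbf A_2\in\mathcal B$, the algebras $\mathbf A_1$ and $\mathbf A_2$ share a common ternary discriminator term.
   Context: The ternary discriminator on a set $A$ is $\tau(x,y,z)=x$ if $x\ne y$, $=z$ if $x=y$. A family of algebras shares a common ternary discriminator term if there is a ternary term $t$ with $t^{\mathbf A}$ equal to the ternary discriminator on $A$ for each member $\mathbf A$. $\mathcal B$ has a majority term if some ternary term $m$ satisfies $m(x,x,y)=m(x,y,x)=m(y,x,x)=x$ in every algebra of $\mathcal B$. *)

theory Defs
  imports Main
begin

datatype ('f, 'v) trm = Var 'v | Fun 'f "('f, 'v) trm list"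

fun vars_term :: "('f, 'v) trm \<Rightarrow> 'v set" where
  "vars_term (Var v) = {v}"
| "vars_term (Fun f ts) = (\<Union>t \<in> set ts. vars_term t)"

fun wf_term :: "('f \<Rightarrow> nat) \<Rightarrow> ('f, 'v) trm \<Rightarrow> bool" where
  "wf_term ar (Var v) = True"
| "wf_term ar (Fun f ts) = (length ts = ar f \<and> (\<forall>t \<in> set ts. wf_term ar t))"

definition ternary_term :: "('f \<Rightarrow> nat) \<Rightarrow> ('f, nat) trm \<Rightarrow> bool" where
  "ternary_term ar t \<longleftrightarrow> wf_term ar t \<and> vars_term t \<subseteq> {0, 1, 2}"

record ('f, 'a) alg =
  carrier :: "'a set"
  ops :: "'f \<Rightarrow> 'a list \<Rightarrow> 'a"

definition is_algebra :: "('f \<Rightarrow> nat) \<Rightarrow> ('f, 'a) alg \<Rightarrow> bool" where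
  "is_algebra ar A \<longleftrightarrow> carrier A \<noteq> {} \<and>
     (\<forall>f xs. length xs = ar f \<and> set xs \<subseteq> carrier A \<longrightarrow> ops A f xs \<in> carrier A)"

definition finite_algebra :: "('f \<Rightarrow> nat) \<Rightarrow> ('f, 'a) alg \<Rightarrow> bool" where
  "finite_algebra ar A \<longleftrightarrow> is_algebra ar A \<and> finite (carrier A)"

fun eval :: "('f, 'a) alg \<Rightarrow> ('v \<Rightarrow> 'a) \<Rightarrow> ('f, 'v) trm \<Rightarrow> 'a" where
  "eval A \<rho> (Var v) = \<rho> v"
| "eval A \<rho> (Fun f ts) = ops A f (map (eval A \<rho>) ts)"

definition eval3 :: "('f, 'a) alg \<Rightarrow> ('f, nat) trm \<Rightarrow> 'a \<Rightarrow> 'a \<Rightarrow> 'a \<Rightarrow> 'a" where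
  "eval3 A t x y z = eval A (\<lambda>i. if i = 0 then x else if i = 1 then y else z) t"

definition discriminator :: "'a \<Rightarrow> 'a \<Rightarrow> 'a \<Rightarrow> 'a" where
  "discriminator x y z = (if x \<noteq> y then x else z)"

definition share_discriminator :: "('f \<Rightarrow> nat) \<Rightarrow> ('f, 'a) alg set \<Rightarrow> bool" where
  "share_discriminator ar \<B> \<longleftrightarrow> (\<exists>t. ternary_term ar t \<and>
     (\<forall>A \<in> \<B>. \<forall>x \<in> carrier A. \<forall>y \<in> carrier A. \<forall>z \<in> carrier A.
        eval3 A t x y z = discriminator x y z))"

definition has_majority_term :: "('f \<Rightarrow> nat) \<Rightarrow> ('f, 'a) alg set \<Rightarrow> bool" where
  "has_majority_term ar \<B> \<longleftrightarrow> (\<exists>m. ternary_term ar m \<and>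
     (\<forall>A \<in> \<B>. \<forall>x \<in> carrier A. \<forall>y \<in> carrier A.
        eval3 A m x x y = x \<and> eval3 A m x y x = x \<and> eval3 A m y x x = x))"

end

theory Submission
  imports Defs
begin

fun tsubst :: "(nat \<Rightarrow> ('f,nat) trm) \<Rightarrow> ('f,nat) trm \<Rightarrow> ('f,nat) trm" where
  "tsubst \<sigma> (Var v) = \<sigma> v"
| "tsubst \<sigma> (Fun f ts) = Fun f (map (tsubst \<sigma>) ts)"

lemma eval_tsubst: "eval A \<rho> (tsubst \<sigma> t) = eval A (\<lambda>v. eval A \<rho> (\<sigma> v)) t"
  by (induction t) (auto intro!: arg_cong[where f="ops A _"])

lemma wf_tsubst: "(\<And>v. wf_term ar (\<sigma> v)) \<Longrightarrow> wf_term ar t \<Longrightarrow> wf_term ar (tsubst \<sigma> t)"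
  by (induction t) auto

lemma vars_tsubst: "vars_term (tsubst \<sigma> t) = (\<Union>v \<in> vars_term t. vars_term (\<sigma> v))"
  by (induction t) auto

lemma eval_closed: "is_algebra ar A \<Longrightarrow> wf_term ar t \<Longrightarrow> (\<And>v. \<rho> v \<in> carrier A)
   \<Longrightarrow> eval A \<rho> t \<in> carrier A"
proof (induction t)
  case (Var x) then show ?case by simp
next
  case (Fun f ts)
  have "set (map (eval A \<rho>) ts) \<subseteq> carrier A" using Fun by auto
  moreover have "length (map (eval A \<rho>) ts) = ar f" using Fun.prems(2) by simp
  ultimately show ?case using Fun.prems(1) unfolding is_algebra_def by simp
qed

lemma eval3_closed: "is_algebra ar A \<Longrightarrow> ternary_term ar t \<Longrightarrow> x \<in> carrier A \<Longrightarrow>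
   y \<in> carrier A \<Longrightarrow> z \<in> carrier A \<Longrightarrow> eval3 A t x y z \<in> carrier A"
  unfolding eval3_def ternary_term_def by (rule eval_closed) auto

definition comp3 where
  "comp3 m t1 t2 t3 = tsubst (\<lambda>i. if i = 0 then t1 else if i = 1 then t2 else t3) m"

lemma eval3_comp3: "eval3 A (comp3 m t1 t2 t3) x y z =
   eval3 A m (eval3 A t1 x y z) (eval3 A t2 x y z) (eval3 A t3 x y z)"
  unfolding eval3_def comp3_def eval_tsubst
  by (rule arg_cong[where f="\<lambda>\<rho>. eval A \<rho> m"]) auto

lemma ternary_comp3: "ternary_term ar m \<Longrightarrow> ternary_term ar t1 \<Longrightarrow> ternary_term ar t2 \<Longrightarrow>
  ternary_term ar t3 \<Longrightarrow> ternary_term ar (comp3 m t1 t2 t3)"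
  unfolding ternary_term_def comp3_def vars_tsubst
  by (auto intro!: wf_tsubst split: if_splits)

lemma main:
  assumes "finite B" "\<forall>A\<in>B. is_algebra ar A" "ternary_term ar m"
    "\<forall>A\<in>B. \<forall>x\<in>carrier A. \<forall>y\<in>carrier A.
        eval3 A m x x y = x \<and> eval3 A m x y x = x \<and> eval3 A m y x x = x"
    "\<forall>A1\<in>B. \<forall>A2\<in>B. share_discriminator ar {A1,A2}"
  shows "share_discriminator ar B"
  using assms
proof (induction "card B" arbitrary: B rule: less_induct)
  case less
  show ?case
  proof (cases "card B \<ge> 3")
    case False
    then have "card B = 0 \<or> card B = 1 \<or> card B = 2" by auto
    moreover
    { assume "card B = 0"
      then have "B = {}" using less.prems(1) by simp
      then have ?thesis unfolding share_discriminator_def using less.prems(3) by blast }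
    moreover
    { assume "card B = 1"
      then obtain a where "B = {a}" by (rule card_1_singletonE)
      then have ?thesis using less.prems(5) by simp }
    moreover
    { assume "card B = 2"
      then obtain a b where "B = {a,b}" by (meson card_2_iff)
      then have ?thesis using less.prems(5) by simp }
    ultimately show ?thesis by blast
  next
    case True
    obtain C where C: "C \<subseteq> B" "card C = 3"
      using obtain_subset_with_card_n[OF True] by blast
    then obtain a c d where acd: "C = {a,c,d}" "a \<noteq> c" "c \<noteq> d" "a \<noteq> d"
      unfolding card_3_iff by blast
    have ab: "a \<in> B" "c \<in> B" "d \<in> B" using C acd by auto
    have rec: "share_discriminator ar (B - {e})" if "e \<in> B" for e
    proof (rule less.hyps)
      show "card (B - {e}) < card B" using that less.prems(1)
        by (meson card_Diff1_less)
      show "finite (B - {e})" using less.prems(1) by simp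
      show "\<forall>A\<in>B - {e}. is_algebra ar A" using less.prems(2) by blast
      show "ternary_term ar m" by (rule less.prems(3))
      show "\<forall>A\<in>B - {e}. \<forall>x\<in>carrier A. \<forall>y\<in>carrier A.
        eval3 A m x x y = x \<and> eval3 A m x y x = x \<and> eval3 A m y x x = x"
        using less.prems(4) by blast
      show "\<forall>A1\<in>B - {e}. \<forall>A2\<in>B - {e}. share_discriminator ar {A1,A2}"
        using less.prems(5) by blast
    qed
    obtain t1 where t1: "ternary_term ar t1" "\<forall>A \<in> B - {a}. \<forall>x \<in> carrier A. \<forall>y \<in> carrier A. \<forall>z \<in> carrier A.
        eval3 A t1 x y z = discriminator x y z"
      using rec[OF ab(1)] unfolding share_discriminator_def by blast
    obtain t2 where t2: "ternary_term ar t2" "\<forall>A \<in> B - {c}. \<forall>x \<in> carrier A. \<forall>y \<in> carrier A. \<forall>z \<in> carrier A.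
        eval3 A t2 x y z = discriminator x y z"
      using rec[OF ab(2)] unfolding share_discriminator_def by blast
    obtain t3 where t3: "ternary_term ar t3" "\<forall>A \<in> B - {d}. \<forall>x \<in> carrier A. \<forall>y \<in> carrier A. \<forall>z \<in> carrier A.
        eval3 A t3 x y z = discriminator x y z"
      using rec[OF ab(3)] unfolding share_discriminator_def by blast
    show ?thesis unfolding share_discriminator_def
    proof (intro exI conjI ballI)
      show "ternary_term ar (comp3 m t1 t2 t3)"
        using ternary_comp3 less.prems(3) t1(1) t2(1) t3(1) by blast
      fix E x y z assume E: "E \<in> B" and xyz: "x \<in> carrier E" "y \<in> carrier E" "z \<in> carrier E"
      have alg: "is_algebra ar E" using E less.prems(2) by auto
      have dv: "discriminator x y z \<in> carrier E" using xyz unfolding discriminator_def by auto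
      have c1: "eval3 E t1 x y z \<in> carrier E" using eval3_closed[OF alg t1(1) xyz] .
      have c2: "eval3 E t2 x y z \<in> carrier E" using eval3_closed[OF alg t2(1) xyz] .
      have c3: "eval3 E t3 x y z \<in> carrier E" using eval3_closed[OF alg t3(1) xyz] .
      have maj: "\<forall>u\<in>carrier E. \<forall>w\<in>carrier E.
        eval3 E m u u w = u \<and> eval3 E m u w u = u \<and> eval3 E m w u u = u"
        using less.prems(4) E by auto
      show "eval3 E (comp3 m t1 t2 t3) x y z = discriminator x y z"
        unfolding eval3_comp3
      proof -
        let ?w1 = "eval3 E t1 x y z" and ?w2 = "eval3 E t2 x y z" and ?w3 = "eval3 E t3 x y z"
          and ?dv = "discriminator x y z"
        have "E \<noteq> a \<and> E \<noteq> c \<or> E \<noteq> a \<and> E \<noteq> d \<or> E \<noteq> c \<and> E \<noteq> d"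
          using acd by blast
        moreover
        { assume "E \<noteq> a \<and> E \<noteq> c"
          then have "?w1 = ?dv" "?w2 = ?dv" using t1(2) t2(2) E xyz by auto
          moreover have "eval3 E m ?dv ?dv ?w3 = ?dv" using maj dv c3 by blast
          ultimately have "eval3 E m ?w1 ?w2 ?w3 = ?dv" by simp }
        moreover
        { assume "E \<noteq> a \<and> E \<noteq> d"
          then have "?w1 = ?dv" "?w3 = ?dv" using t1(2) t3(2) E xyz by auto
          moreover have "eval3 E m ?dv ?w2 ?dv = ?dv" using maj dv c2 by blast
          ultimately have "eval3 E m ?w1 ?w2 ?w3 = ?dv" by simp }
        moreover
        { assume "E \<noteq> c \<and> E \<noteq> d"
          then have "?w2 = ?dv" "?w3 = ?dv" using t2(2) t3(2) E xyz by auto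
          moreover have "eval3 E m ?w1 ?dv ?dv = ?dv" using maj dv c1 by blast
          ultimately have "eval3 E m ?w1 ?w2 ?w3 = ?dv" by simp }
        ultimately show "eval3 E m ?w1 ?w2 ?w3 = ?dv" by blast
      qed
    qed
  qed
qed

theorem corollary3p3:
  fixes ar :: "'f \<Rightarrow> nat" and \<B> :: "('f, 'a) alg set"
  assumes "finite \<B>"
    and "\<forall>A \<in> \<B>. finite_algebra ar A"
    and "has_majority_term ar \<B>"
  shows "share_discriminator ar \<B> \<longleftrightarrow>
         (\<forall>A1 \<in> \<B>. \<forall>A2 \<in> \<B>. share_discriminator ar {A1, A2})"
proof
  assume "share_discriminator ar \<B>"
  then show "\<forall>A1 \<in> \<B>. \<forall>A2 \<in> \<B>. share_discriminator ar {A1, A2}"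
    unfolding share_discriminator_def by blast
next
  assume h: "\<forall>A1 \<in> \<B>. \<forall>A2 \<in> \<B>. share_discriminator ar {A1, A2}"
  obtain m where m: "ternary_term ar m" "\<forall>A \<in> \<B>. \<forall>x \<in> carrier A. \<forall>y \<in> carrier A.
        eval3 A m x x y = x \<and> eval3 A m x y x = x \<and> eval3 A m y x x = x"
    using assms(3) unfolding has_majority_term_def by blast
  show "share_discriminator ar \<B>"
    using main[OF assms(1) _ m h] assms(2) unfolding finite_algebra_def by blast
qed

end
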